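(* Let $G$ be a cubical $\omega$-category with connections, and $1\le m\le n$. If $1\le i\le m$ then $\Phi_m\varepsilon_i=\varepsilon_1\Phi_{m-1}$ as maps $G_{n-1}\to G_n$. If $1\le i\le m-1$ then $\Phi_m\Gamma^\alpha_i=\varepsilon_1\Phi_{m-1}$ as maps $G_{n-1}\to G_n$, for $\alpha=\pm$.
   Context: A cubical $\omega$-category with connections $G$ consists of sets $G_n$ ($n\ge0$), face maps $\partial^\alpha_i:G_n\to G_{n-1}$, degeneracies $\varepsilon_i:G_{n-1}\to G_n$, connections $\Gamma^\alpha_i:G_n\to G_{n+1}$ ($1\le i\le n$, $\alpha=\pm$) and partial compositions $\circ_j$ on $G_n$ ($1\le j\le n$, $a\circ_jb$ defined iff $\partial^+_ja=\partial^-_jb$) satisfying: $\partial^\alpha_i\partial^\beta_j=\partial^\beta_{j-1}\partial^\alpha_i$ ($i<j$), $\varepsilon_i\varepsilon_j=\varepsilon_{j+1}\varepsilon_i$ ($i\le j$), $\partial^\alpha_i\varepsilon_j=\varepsilon_{j-1}\partial^\alpha_i$ ($i<j$), $\varepsilon_j\partial^\alpha_{i-1}$ ($i>j$), $\mathrm{id}$ ($i=j$); $\Gamma^\alpha_i\Gamma^\beta_j=\Gamma^\beta_{j+1}\Gamma^\alpha_i$ ($i<j$), $\Gamma^\alpha_i\Gamma^\alpha_i=\Gamma^\alpha_{i+1}\Gamma^\alpha_i$, $\Gamma^\alpha_i\varepsilon_j=\varepsilon_{j+1}\Gamma^\alpha_i$ ($i<j$), $\varepsilon_j\Gamma^\alpha_{i-1}$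 ($i>j$), $\Gamma^\alpha_j\varepsilon_j=\varepsilon_{j+1}\varepsilon_j$, $\partial^\alpha_i\Gamma^\beta_j=\Gamma^\beta_{j-1}\partial^\alpha_i$ ($i<j$), $\Gamma^\beta_j\partial^\alpha_{i-1}$ ($i>j+1$), $\partial^\alpha_j\Gamma^\alpha_j=\partial^\alpha_{j+1}\Gamma^\alpha_j=\mathrm{id}$, $\partial^\alpha_j\Gamma^{-\alpha}_j=\partial^\alpha_{j+1}\Gamma^{-\alpha}_j=\varepsilon_j\partial^\alpha_j$; $\partial^-_j(a\circ_jb)=\partial^-_ja$, $\partial^+_j(a\circ_jb)=\partial^+_jb$, $\partial^\alpha_i(a\circ_jb)=\partial^\alpha_ia\circ_{j-1}\partial^\alpha_ib$ ($i<j$), $\partial^\alpha_ia\circ_j\partial^\alpha_ib$ ($i>j$); interchange for $i\ne j$; $\varepsilon_i(a\circ_jb)=\varepsilon_ia\circ_{j+1}\varepsilon_ib$ ($i\le j$), $\varepsilon_ia\circ_j\varepsilon_ib$ ($i>j$); $\Gamma^\alpha_i(a\circ_jb)=\Gamma^\alpha_ia\circ_{j+1}\Gamma^\alpha_ib$ ($i<j$), $\Gamma^\alpha_ia\circ_j\Gamma^\alpha_ib$ ($i>j$); $\Gamma^+_j(a\circ_jb)=(\Gamma^+_ja\circ_j\varepsilon_ja)\circ_{j+1}(\varepsilon_{j+1}a\circ_j\Gamma^+_jb)$, $\Gamma^-_j(a\circ_jb)=(\Gamma^-_ja\circ_j\varepsilon_{j+1}b)\circ_{j+1}(\varepsilon_jb\circ_j\Gamma^-_jb)$;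 each $\circ_j$ is a category structure with identities $\varepsilon_jy$; $\Gamma^+_ix\circ_i\Gamma^-_ix=\varepsilon_{i+1}x$, $\Gamma^+_ix\circ_{i+1}\Gamma^-_ix=\varepsilon_ix$. Folding operations on $G_k$: $\psi_ix=\Gamma^+_i\partial^-_{i+1}x\circ_{i+1}x\circ_{i+1}\Gamma^-_i\partial^+_{i+1}x$ ($1\le i\le k-1$), $\Psi_r=\psi_{r-1}\cdots\psi_1$ ($1\le r\le k$), $\Phi_m=\Psi_1\Psi_2\cdots\Psi_m$ ($0\le m\le k$). *)

theory Defs
  imports Main
begin

text \<open>Every operation is indexed by the dimension n of its (first) argument:
  face n i \<alpha> : G_n \<rightarrow> G_(n-1)   (1 \<le> i \<le> n),
  degen n i : G_n \<rightarrow> G_(n+1)      (1 \<le> i \<le> n+1), i.e. epsilon_i,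
  conn n i \<alpha> : G_n \<rightarrow> G_(n+1)   (1 \<le> i \<le> n), i.e. Gamma^alpha_i,
  comp n j a b : a \<circ>_j b in G_n  (1 \<le> j \<le> n).
  Signs: True = +, False = -.\<close>

record 'a cubical_data =
  cells :: "nat \<Rightarrow> 'a set"
  face  :: "nat \<Rightarrow> nat \<Rightarrow> bool \<Rightarrow> 'a \<Rightarrow> 'a"
  degen :: "nat \<Rightarrow> nat \<Rightarrow> 'a \<Rightarrow> 'a"
  conn  :: "nat \<Rightarrow> nat \<Rightarrow> bool \<Rightarrow> 'a \<Rightarrow> 'a"
  comp  :: "nat \<Rightarrow> nat \<Rightarrow> 'a \<Rightarrow> 'a \<Rightarrow> 'a"

definition composable :: "'a cubical_data \<Rightarrow> nat \<Rightarrow> nat \<Rightarrow> 'a \<Rightarrow> 'a \<Rightarrow> bool" where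
  "composable C n j a b \<longleftrightarrow> a \<in> cells C n \<and> b \<in> cells C n \<and> 1 \<le> j \<and> j \<le> n
      \<and> face C n j True a = face C n j False b"

definition cubical_omega_cat_conn :: "'a cubical_data \<Rightarrow> bool" where
  "cubical_omega_cat_conn C \<longleftrightarrow>
   \<comment> \<open>closure of the operations\<close>
   (\<forall>n i \<alpha> x. x \<in> cells C n \<and> 1 \<le> i \<and> i \<le> n \<longrightarrow> face C n i \<alpha> x \<in> cells C (n - 1)) \<and>
   (\<forall>n i x. x \<in> cells C n \<and> 1 \<le> i \<and> i \<le> n + 1 \<longrightarrow> degen C n i x \<in> cells C (n + 1)) \<and>
   (\<forall>n i \<alpha> x. x \<in> cells C n \<and> 1 \<le> i \<and> i \<le> n \<longrightarrow> conn C n i \<alpha> x \<in> cells C (n + 1)) \<and>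
   (\<forall>n j a b. composable C n j a b \<longrightarrow> comp C n j a b \<in> cells C n) \<and>
   \<comment> \<open>face-face\<close>
   (\<forall>n i j \<alpha> \<beta> x. x \<in> cells C n \<and> 1 \<le> i \<and> i < j \<and> j \<le> n \<longrightarrow>
      face C (n - 1) i \<alpha> (face C n j \<beta> x) = face C (n - 1) (j - 1) \<beta> (face C n i \<alpha> x)) \<and>
   \<comment> \<open>degeneracy-degeneracy\<close>
   (\<forall>n i j x. x \<in> cells C n \<and> 1 \<le> i \<and> i \<le> j \<and> j \<le> n + 1 \<longrightarrow>
      degen C (n + 1) i (degen C n j x) = degen C (n + 1) (j + 1) (degen C n i x)) \<and>
   \<comment> \<open>face-degeneracy\<close>
   (\<forall>n i j \<alpha> x. x \<in> cells C n \<and> 1 \<le> i \<and> i \<le> n + 1 \<and> 1 \<le> j \<and> j \<le> n + 1 \<longrightarrow>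
      face C (n + 1) i \<alpha> (degen C n j x) =
        (if i < j then degen C (n - 1) (j - 1) (face C n i \<alpha> x)
         else if j < i then degen C (n - 1) j (face C n (i - 1) \<alpha> x)
         else x)) \<and>
   \<comment> \<open>connection-connection\<close>
   (\<forall>n i j \<alpha> \<beta> x. x \<in> cells C n \<and> 1 \<le> i \<and> i < j \<and> j \<le> n \<longrightarrow>
      conn C (n + 1) i \<alpha> (conn C n j \<beta> x) = conn C (n + 1) (j + 1) \<beta> (conn C n i \<alpha> x)) \<and>
   (\<forall>n i \<alpha> x. x \<in> cells C n \<and> 1 \<le> i \<and> i \<le> n \<longrightarrow>
      conn C (n + 1) i \<alpha> (conn C n i \<alpha> x) = conn C (n + 1) (i + 1) \<alpha> (conn C n i \<alpha> x)) \<and>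
   \<comment> \<open>connection-degeneracy\<close>
   (\<forall>n i j \<alpha> x. x \<in> cells C n \<and> 1 \<le> i \<and> i \<le> n + 1 \<and> 1 \<le> j \<and> j \<le> n + 1 \<longrightarrow>
      conn C (n + 1) i \<alpha> (degen C n j x) =
        (if i < j then degen C (n + 1) (j + 1) (conn C n i \<alpha> x)
         else if j < i then degen C (n + 1) j (conn C n (i - 1) \<alpha> x)
         else degen C (n + 1) (j + 1) (degen C n j x))) \<and>
   \<comment> \<open>face-connection\<close>
   (\<forall>n i j \<alpha> \<beta> x. x \<in> cells C n \<and> 1 \<le> j \<and> j \<le> n \<and> 1 \<le> i \<and> i \<le> n + 1 \<longrightarrow>
      face C (n + 1) i \<alpha> (conn C n j \<beta> x) =
        (if i < j then conn C (n - 1) (j - 1) \<beta> (face C n i \<alpha> x)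
         else if j + 1 < i then conn C (n - 1) j \<beta> (face C n (i - 1) \<alpha> x)
         else if \<alpha> = \<beta> then x
         else degen C (n - 1) j (face C n j \<alpha> x))) \<and>
   \<comment> \<open>faces of composites\<close>
   (\<forall>n j a b. composable C n j a b \<longrightarrow>
      face C n j False (comp C n j a b) = face C n j False a \<and>
      face C n j True (comp C n j a b) = face C n j True b \<and>
      (\<forall>i \<alpha>. 1 \<le> i \<and> i < j \<longrightarrow>
         face C n i \<alpha> (comp C n j a b) = comp C (n - 1) (j - 1) (face C n i \<alpha> a) (face C n i \<alpha> b)) \<and>
      (\<forall>i \<alpha>. j < i \<and> i \<le> n \<longrightarrow>
         face C n i \<alpha> (comp C n j a b) = comp C (n - 1) j (face C n i \<alpha> a) (face C n i \<alpha> b))) \<and>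
   \<comment> \<open>interchange\<close>
   (\<forall>n i j a b c d. i \<noteq> j \<and> composable C n i a b \<and> composable C n i c d \<and>
        composable C n j a c \<and> composable C n j b d \<longrightarrow>
      comp C n j (comp C n i a b) (comp C n i c d) = comp C n i (comp C n j a c) (comp C n j b d)) \<and>
   \<comment> \<open>degeneracies of composites\<close>
   (\<forall>n i j a b. composable C n j a b \<and> 1 \<le> i \<and> i \<le> n + 1 \<longrightarrow>
      degen C n i (comp C n j a b) =
        (if i \<le> j then comp C (n + 1) (j + 1) (degen C n i a) (degen C n i b)
         else comp C (n + 1) j (degen C n i a) (degen C n i b))) \<and>
   \<comment> \<open>connections of composites\<close>
   (\<forall>n i j \<alpha> a b. composable C n j a b \<and> 1 \<le> i \<and> i \<le> n \<and> i \<noteq> j \<longrightarrow>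
      conn C n i \<alpha> (comp C n j a b) =
        (if i < j then comp C (n + 1) (j + 1) (conn C n i \<alpha> a) (conn C n i \<alpha> b)
         else comp C (n + 1) j (conn C n i \<alpha> a) (conn C n i \<alpha> b))) \<and>
   (\<forall>n j a b. composable C n j a b \<longrightarrow>
      conn C n j True (comp C n j a b) =
        comp C (n + 1) (j + 1)
          (comp C (n + 1) j (conn C n j True a) (degen C n j a))
          (comp C (n + 1) j (degen C n (j + 1) a) (conn C n j True b))) \<and>
   (\<forall>n j a b. composable C n j a b \<longrightarrow>
      conn C n j False (comp C n j a b) =
        comp C (n + 1) (j + 1)
          (comp C (n + 1) j (conn C n j False a) (degen C n (j + 1) b))
          (comp C (n + 1) j (degen C n j b) (conn C n j False b))) \<and>
   \<comment> \<open>each \<circ>_j is a category with identities \<epsilon>_j y\<close>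
   (\<forall>n j a b c. composable C n j a b \<and> composable C n j b c \<longrightarrow>
      comp C n j (comp C n j a b) c = comp C n j a (comp C n j b c)) \<and>
   (\<forall>n j a. a \<in> cells C n \<and> 1 \<le> j \<and> j \<le> n \<longrightarrow>
      comp C n j (degen C (n - 1) j (face C n j False a)) a = a \<and>
      comp C n j a (degen C (n - 1) j (face C n j True a)) = a) \<and>
   \<comment> \<open>connection cancellation laws\<close>
   (\<forall>n i x. x \<in> cells C n \<and> 1 \<le> i \<and> i \<le> n \<longrightarrow>
      comp C (n + 1) i (conn C n i True x) (conn C n i False x) = degen C n (i + 1) x \<and>
      comp C (n + 1) (i + 1) (conn C n i True x) (conn C n i False x) = degen C n i x)"

definition psi :: "'a cubical_data \<Rightarrow> nat \<Rightarrow> nat \<Rightarrow> 'a \<Rightarrow> 'a" where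
  "psi C k i x =
     comp C k (i + 1)
       (comp C k (i + 1) (conn C (k - 1) i True (face C k (i + 1) False x)) x)
       (conn C (k - 1) i False (face C k (i + 1) True x))"

fun Psi :: "'a cubical_data \<Rightarrow> nat \<Rightarrow> nat \<Rightarrow> 'a \<Rightarrow> 'a" where
  "Psi C k 0 x = x"
| "Psi C k (Suc 0) x = x"
| "Psi C k (Suc (Suc r)) x = psi C k (Suc r) (Psi C k (Suc r) x)"

fun Phi :: "'a cubical_data \<Rightarrow> nat \<Rightarrow> nat \<Rightarrow> 'a \<Rightarrow> 'a" where
  "Phi C k 0 x = x"
| "Phi C k (Suc m) x = Phi C k m (Psi C k (Suc m) x)"

end

theory Submission
  imports Defs
begin

locale coc =
  fixes C :: "'a cubical_data"
  assumes ax: "cubical_omega_cat_conn C"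
begin

abbreviation "G \<equiv> cells C"
abbreviation "fc \<equiv> face C"
abbreviation "dg \<equiv> degen C"
abbreviation "cn \<equiv> conn C"
abbreviation "cp \<equiv> comp C"

lemmas A = ax[unfolded cubical_omega_cat_conn_def]
lemmas a1 = A[THEN conjunct1, rule_format]
lemmas a2 = A[THEN conjunct2, THEN conjunct1, rule_format]
lemmas a3 = A[THEN conjunct2, THEN conjunct2, THEN conjunct1, rule_format]
lemmas a4 = A[THEN conjunct2, THEN conjunct2, THEN conjunct2, THEN conjunct1, rule_format]
lemmas r4 = A[THEN conjunct2, THEN conjunct2, THEN conjunct2, THEN conjunct2]
lemmas a5 = r4[THEN conjunct1, rule_format]
lemmas a6 = r4[THEN conjunct2, THEN conjunct1, rule_format]
lemmas a7 = r4[THEN conjunct2, THEN conjunct2, THEN conjunct1, rule_format]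
lemmas a8 = r4[THEN conjunct2, THEN conjunct2, THEN conjunct2, THEN conjunct1, rule_format]
lemmas r8 = r4[THEN conjunct2, THEN conjunct2, THEN conjunct2, THEN conjunct2]
lemmas a9 = r8[THEN conjunct1, rule_format]
lemmas a10 = r8[THEN conjunct2, THEN conjunct1, rule_format]
lemmas a11 = r8[THEN conjunct2, THEN conjunct2, THEN conjunct1, rule_format]
lemmas a12 = r8[THEN conjunct2, THEN conjunct2, THEN conjunct2, THEN conjunct1, rule_format]
lemmas r12 = r8[THEN conjunct2, THEN conjunct2, THEN conjunct2, THEN conjunct2]
lemmas a13 = r12[THEN conjunct1, rule_format]
lemmas a14 = r12[THEN conjunct2, THEN conjunct1, rule_format]
lemmas a15 = r12[THEN conjunct2, THEN conjunct2, THEN conjunct1, rule_format]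
lemmas a16 = r12[THEN conjunct2, THEN conjunct2, THEN conjunct2, THEN conjunct1, rule_format]
lemmas r16 = r12[THEN conjunct2, THEN conjunct2, THEN conjunct2, THEN conjunct2]
lemmas a17 = r16[THEN conjunct1, rule_format]
lemmas a18 = r16[THEN conjunct2, THEN conjunct1, rule_format]
lemmas a19 = r16[THEN conjunct2, THEN conjunct2, THEN conjunct1, rule_format]
lemmas a20 = r16[THEN conjunct2, THEN conjunct2, THEN conjunct2, rule_format]


lemma face_in[simp]: "x \<in> G (Suc n) \<Longrightarrow> 1 \<le> i \<Longrightarrow> i \<le> Suc n \<Longrightarrow> fc (Suc n) i \<alpha> x \<in> G n"
  using a1[of x "Suc n" i \<alpha>] by simp
lemma degen_in[simp]: "x \<in> G n \<Longrightarrow> 1 \<le> i \<Longrightarrow> i \<le> Suc n \<Longrightarrow> dg n i x \<in> G (Suc n)"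
  using a2[of x n i] by simp
lemma conn_in[simp]: "x \<in> G n \<Longrightarrow> 1 \<le> i \<Longrightarrow> i \<le> n \<Longrightarrow> cn n i \<alpha> x \<in> G (Suc n)"
  using a3[of x n i \<alpha>] by simp
lemma comp_in[simp]: "composable C n j a b \<Longrightarrow> cp n j a b \<in> G n"
  using a4 by blast

lemma ff: "x \<in> G (Suc (Suc n)) \<Longrightarrow> 1 \<le> i \<Longrightarrow> i < j \<Longrightarrow> j \<le> Suc (Suc n) \<Longrightarrow>
  fc (Suc n) i \<alpha> (fc (Suc (Suc n)) j \<beta> x) = fc (Suc n) (j - 1) \<beta> (fc (Suc (Suc n)) i \<alpha> x)"
  using a5[of x "Suc (Suc n)" i j \<alpha> \<beta>] by simp
lemma dd: "x \<in> G n \<Longrightarrow> 1 \<le> i \<Longrightarrow> i \<le> j \<Longrightarrow> j \<le> Suc n \<Longrightarrow>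
  dg (Suc n) i (dg n j x) = dg (Suc n) (Suc j) (dg n i x)"
  using a6[of x n i j] by simp
lemma fd_lt[simp]: "x \<in> G (Suc n) \<Longrightarrow> 1 \<le> i \<Longrightarrow> i < j \<Longrightarrow> j \<le> Suc (Suc n) \<Longrightarrow>
  fc (Suc (Suc n)) i \<alpha> (dg (Suc n) j x) = dg n (j - 1) (fc (Suc n) i \<alpha> x)"
  using a7[of x "Suc n" i j \<alpha>] by simp
lemma fd_gt[simp]: "x \<in> G (Suc n) \<Longrightarrow> 1 \<le> j \<Longrightarrow> j < i \<Longrightarrow> i \<le> Suc (Suc n) \<Longrightarrow>
  fc (Suc (Suc n)) i \<alpha> (dg (Suc n) j x) = dg n j (fc (Suc n) (i - 1) \<alpha> x)"
  using a7[of x "Suc n" i j \<alpha>] by simp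
lemma fd_eq[simp]: "x \<in> G n \<Longrightarrow> 1 \<le> i \<Longrightarrow> i \<le> Suc n \<Longrightarrow> fc (Suc n) i \<alpha> (dg n i x) = x"
  using a7[of x n i i \<alpha>] by simp
lemma cc_lt: "x \<in> G n \<Longrightarrow> 1 \<le> i \<Longrightarrow> i < j \<Longrightarrow> j \<le> n \<Longrightarrow>
  cn (Suc n) i \<alpha> (cn n j \<beta> x) = cn (Suc n) (Suc j) \<beta> (cn n i \<alpha> x)"
  using a8[of x n i j \<alpha> \<beta>] by simp
lemma cc_eq: "x \<in> G n \<Longrightarrow> 1 \<le> i \<Longrightarrow> i \<le> n \<Longrightarrow>
  cn (Suc n) i \<alpha> (cn n i \<alpha> x) = cn (Suc n) (Suc i) \<alpha> (cn n i \<alpha> x)"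
  using a9[of x n i \<alpha>] by simp
lemma cd_lt: "x \<in> G n \<Longrightarrow> 1 \<le> i \<Longrightarrow> i < j \<Longrightarrow> j \<le> Suc n \<Longrightarrow>
  cn (Suc n) i \<alpha> (dg n j x) = dg (Suc n) (Suc j) (cn n i \<alpha> x)"
  using a10[of x n i j \<alpha>] by simp
lemma cd_gt: "x \<in> G n \<Longrightarrow> 1 \<le> j \<Longrightarrow> j < i \<Longrightarrow> i \<le> Suc n \<Longrightarrow>
  cn (Suc n) i \<alpha> (dg n j x) = dg (Suc n) j (cn n (i - 1) \<alpha> x)"
  using a10[of x n i j \<alpha>] by simp
lemma cd_eq: "x \<in> G n \<Longrightarrow> 1 \<le> j \<Longrightarrow> j \<le> Suc n \<Longrightarrow>
  cn (Suc n) j \<alpha> (dg n j x) = dg (Suc n) (Suc j) (dg n j x)"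
  using a10[of x n j j \<alpha>] by simp
lemma fcn_lt[simp]: "x \<in> G (Suc n) \<Longrightarrow> 1 \<le> i \<Longrightarrow> i < j \<Longrightarrow> j \<le> Suc n \<Longrightarrow>
  fc (Suc (Suc n)) i \<alpha> (cn (Suc n) j \<beta> x) = cn n (j - 1) \<beta> (fc (Suc n) i \<alpha> x)"
  using a11[of x "Suc n" j i \<alpha> \<beta>] by simp
lemma fcn_gt[simp]: "x \<in> G (Suc n) \<Longrightarrow> 1 \<le> j \<Longrightarrow> Suc j < i \<Longrightarrow> i \<le> Suc (Suc n) \<Longrightarrow>
  fc (Suc (Suc n)) i \<alpha> (cn (Suc n) j \<beta> x) = cn n j \<beta> (fc (Suc n) (i - 1) \<alpha> x)"
  using a11[of x "Suc n" j i \<alpha> \<beta>] by simp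
lemma fcn_s1[simp]: "x \<in> G n \<Longrightarrow> 1 \<le> j \<Longrightarrow> j \<le> n \<Longrightarrow> fc (Suc n) j \<alpha> (cn n j \<alpha> x) = x"
  using a11[of x n j j \<alpha> \<alpha>] by simp
lemma fcn_s2[simp]: "x \<in> G n \<Longrightarrow> 1 \<le> j \<Longrightarrow> j \<le> n \<Longrightarrow> fc (Suc n) (Suc j) \<alpha> (cn n j \<alpha> x) = x"
  using a11[of x n j "Suc j" \<alpha> \<alpha>] by simp
lemma fcn_d1[simp]: "x \<in> G (Suc n) \<Longrightarrow> 1 \<le> j \<Longrightarrow> j \<le> Suc n \<Longrightarrow> \<beta> \<noteq> \<alpha> \<Longrightarrow>
   fc (Suc (Suc n)) j \<alpha> (cn (Suc n) j \<beta> x) = dg n j (fc (Suc n) j \<alpha> x)"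
  using a11[of x "Suc n" j j \<alpha> \<beta>] by simp
lemma fcn_d2[simp]: "x \<in> G (Suc n) \<Longrightarrow> 1 \<le> j \<Longrightarrow> j \<le> Suc n \<Longrightarrow> \<beta> \<noteq> \<alpha> \<Longrightarrow>
   fc (Suc (Suc n)) (Suc j) \<alpha> (cn (Suc n) j \<beta> x) = dg n j (fc (Suc n) j \<alpha> x)"
  using a11[of x "Suc n" j "Suc j" \<alpha> \<beta>] by simp

lemma fcp_m[simp]: "composable C n j a b \<Longrightarrow> fc n j False (cp n j a b) = fc n j False a"
  using a12 by blast
lemma fcp_p[simp]: "composable C n j a b \<Longrightarrow> fc n j True (cp n j a b) = fc n j True b"
  using a12 by blast
lemma fcp_lt[simp]: "composable C (Suc n) j a b \<Longrightarrow> 1 \<le> i \<Longrightarrow> i < j \<Longrightarrow>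
  fc (Suc n) i \<alpha> (cp (Suc n) j a b) = cp n (j - 1) (fc (Suc n) i \<alpha> a) (fc (Suc n) i \<alpha> b)"
  using a12[of "Suc n" j a b] by simp
lemma fcp_gt[simp]: "composable C (Suc n) j a b \<Longrightarrow> j < i \<Longrightarrow> i \<le> Suc n \<Longrightarrow>
  fc (Suc n) i \<alpha> (cp (Suc n) j a b) = cp n j (fc (Suc n) i \<alpha> a) (fc (Suc n) i \<alpha> b)"
  using a12[of "Suc n" j a b] by simp

lemma interchange: "i \<noteq> j \<Longrightarrow> composable C n i a b \<Longrightarrow> composable C n i c d \<Longrightarrow>
  composable C n j a c \<Longrightarrow> composable C n j b d \<Longrightarrow>
  cp n j (cp n i a b) (cp n i c d) = cp n i (cp n j a c) (cp n j b d)"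
  using a13[of i j n a b c d] by blast
lemma dcp_le: "composable C n j a b \<Longrightarrow> 1 \<le> i \<Longrightarrow> i \<le> j \<Longrightarrow>
  dg n i (cp n j a b) = cp (Suc n) (Suc j) (dg n i a) (dg n i b)"
  using a14[of n j a b i] by (simp add: composable_def)
lemma dcp_gt: "composable C n j a b \<Longrightarrow> j < i \<Longrightarrow> i \<le> Suc n \<Longrightarrow>
  dg n i (cp n j a b) = cp (Suc n) j (dg n i a) (dg n i b)"
  using a14[of n j a b i] by (simp add: composable_def)
lemma ccp_lt: "composable C n j a b \<Longrightarrow> 1 \<le> i \<Longrightarrow> i < j \<Longrightarrow>
  cn n i \<alpha> (cp n j a b) = cp (Suc n) (Suc j) (cn n i \<alpha> a) (cn n i \<alpha> b)"
  using a15[of n j a b i \<alpha>] by (simp add: composable_def)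
lemma ccp_gt: "composable C n j a b \<Longrightarrow> j < i \<Longrightarrow> i \<le> n \<Longrightarrow>
  cn n i \<alpha> (cp n j a b) = cp (Suc n) j (cn n i \<alpha> a) (cn n i \<alpha> b)"
  using a15[of n j a b i \<alpha>] by (simp add: composable_def)
lemma trp: "composable C n j a b \<Longrightarrow>
      cn n j True (cp n j a b) =
        cp (Suc n) (Suc j)
          (cp (Suc n) j (cn n j True a) (dg n j a))
          (cp (Suc n) j (dg n (Suc j) a) (cn n j True b))"
  using a16[of n j a b] by simp
lemma trm: "composable C n j a b \<Longrightarrow>
      cn n j False (cp n j a b) =
        cp (Suc n) (Suc j)
          (cp (Suc n) j (cn n j False a) (dg n (Suc j) b))
          (cp (Suc n) j (dg n j b) (cn n j False b))"
  using a17[of n j a b] by simp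
lemma assoc: "composable C n j a b \<Longrightarrow> composable C n j b c \<Longrightarrow>
      cp n j (cp n j a b) c = cp n j a (cp n j b c)"
  using a18 by blast
lemma unit_l: "composable C (Suc n) j e a \<Longrightarrow> e = dg n j y \<Longrightarrow> y \<in> G n \<Longrightarrow> cp (Suc n) j e a = a"
proof -
  assume h: "composable C (Suc n) j e a" "e = dg n j y" "y \<in> G n"
  then have j: "1 \<le> j" "j \<le> Suc n" "a \<in> G (Suc n)" by (auto simp: composable_def)
  from h have "fc (Suc n) j True e = fc (Suc n) j False a" by (simp add: composable_def)
  with h j have "y = fc (Suc n) j False a" by simp
  with h j a19[of a "Suc n" j] show ?thesis by simp
qed
lemma unit_r: "composable C (Suc n) j a e \<Longrightarrow> e = dg n j y \<Longrightarrow> y \<in> G n \<Longrightarrow> cp (Suc n) j a e = a"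
proof -
  assume h: "composable C (Suc n) j a e" "e = dg n j y" "y \<in> G n"
  then have j: "1 \<le> j" "j \<le> Suc n" "a \<in> G (Suc n)" by (auto simp: composable_def)
  from h have "fc (Suc n) j True a = fc (Suc n) j False e" by (simp add: composable_def)
  with h j have "y = fc (Suc n) j True a" by simp
  with h j a19[of a "Suc n" j] show ?thesis by simp
qed
lemma cancel1: "x \<in> G n \<Longrightarrow> 1 \<le> i \<Longrightarrow> i \<le> n \<Longrightarrow>
   cp (Suc n) i (cn n i True x) (cn n i False x) = dg n (Suc i) x"
  using a20[of x n i] by simp
lemma cancel2: "x \<in> G n \<Longrightarrow> 1 \<le> i \<Longrightarrow> i \<le> n \<Longrightarrow>
   cp (Suc n) (Suc i) (cn n i True x) (cn n i False x) = dg n i x"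
  using a20[of x n i] by simp
declare cancel1[simp] cancel2[simp]

lemma unit_l'[simp]: "composable C (Suc n) j (dg n j y) a \<Longrightarrow> y \<in> G n \<Longrightarrow> cp (Suc n) j (dg n j y) a = a"
  using unit_l by blast
lemma unit_r'[simp]: "composable C (Suc n) j a (dg n j y) \<Longrightarrow> y \<in> G n \<Longrightarrow> cp (Suc n) j a (dg n j y) = a"
  using unit_r by blast

lemmas cs = composable_def

lemma psi_in[simp]: "y \<in> G (Suc n) \<Longrightarrow> 1 \<le> i \<Longrightarrow> i \<le> n \<Longrightarrow> psi C (Suc n) i y \<in> G (Suc n)"
  by (simp add: psi_def cs)

lemma psi_dg_eq: "x \<in> G n \<Longrightarrow> 1 \<le> i \<Longrightarrow> i \<le> n \<Longrightarrow> psi C (Suc n) i (dg n i x) = dg n i x"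
proof -
  assume h: "x \<in> G n" "1 \<le> i" "i \<le> n"
  then obtain m where n: "n = Suc m" by (cases n) auto
  show ?thesis using h unfolding n by (simp add: psi_def cs cd_eq)
qed

lemma psi_dg_suc: "x \<in> G n \<Longrightarrow> 1 \<le> i \<Longrightarrow> i \<le> n \<Longrightarrow> psi C (Suc n) i (dg n (Suc i) x) = dg n i x"
  by (simp add: psi_def cs cancel2)

lemma psi_dg_lt: "x \<in> G n \<Longrightarrow> 1 \<le> j \<Longrightarrow> j < i \<Longrightarrow> i \<le> n \<Longrightarrow>
   psi C (Suc n) i (dg n j x) = dg n j (psi C n (i - 1) x)"
proof -
  assume h: "x \<in> G n" "1 \<le> j" "j < i" "i \<le> n"
  then obtain m where n: "n = Suc m" by (cases n) auto
  from h obtain k where k: "i = Suc k" by (cases i) auto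
  show ?thesis using h unfolding n k by (simp add: psi_def cs cd_gt dcp_le)
qed

lemma psi_dg_gt: "x \<in> G n \<Longrightarrow> 1 \<le> i \<Longrightarrow> Suc i < j \<Longrightarrow> j \<le> Suc n \<Longrightarrow>
   psi C (Suc n) i (dg n j x) = dg n j (psi C n i x)"
proof -
  assume h: "x \<in> G n" "1 \<le> i" "Suc i < j" "j \<le> Suc n"
  then obtain m where n: "n = Suc m" by (cases n) auto
  show ?thesis using h unfolding n by (simp add: psi_def cs cd_lt dcp_gt)
qed

lemma psi_cn_eq: "x \<in> G n \<Longrightarrow> 1 \<le> i \<Longrightarrow> i \<le> n \<Longrightarrow> psi C (Suc n) i (cn n i \<alpha> x) = dg n i x"
proof -
  assume h: "x \<in> G n" "1 \<le> i" "i \<le> n"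
  then obtain m where n: "n = Suc m" by (cases n) auto
  show ?thesis using h unfolding n by (cases \<alpha>) (simp_all add: psi_def cs cd_eq cancel2)
qed

lemma psi_cn_gt: "x \<in> G n \<Longrightarrow> 1 \<le> a \<Longrightarrow> a + 2 \<le> l \<Longrightarrow> l \<le> n \<Longrightarrow>
   psi C (Suc n) l (cn n a \<beta> x) = cn n a \<beta> (psi C n (l - 1) x)"
proof -
  assume h: "x \<in> G n" "1 \<le> a" "a + 2 \<le> l" "l \<le> n"
  then obtain m where n: "n = Suc m" by (cases n) auto
  from h obtain k where k: "l = Suc k" by (cases l) auto
  show ?thesis using h unfolding n k by (simp add: psi_def cs cc_lt[symmetric] ccp_lt)
qed

lemma psi_cn_lt: "x \<in> G n \<Longrightarrow> 1 \<le> l \<Longrightarrow> l + 2 \<le> a \<Longrightarrow> a \<le> n \<Longrightarrow>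
   psi C (Suc n) l (cn n a \<beta> x) = cn n a \<beta> (psi C n l x)"
proof -
  assume h: "x \<in> G n" "1 \<le> l" "l + 2 \<le> a" "a \<le> n"
  then obtain m where n: "n = Suc m" by (cases n) auto
  from h obtain k where k: "a = Suc k" by (cases a) auto
  show ?thesis using h unfolding n k by (simp add: psi_def cs cc_lt ccp_gt)
qed

lemma K2:
  assumes w: "w \<in> G (Suc q)" and i: "1 \<le> i" "i \<le> Suc q"
  shows "cp (Suc (Suc (Suc q))) (Suc (Suc i)) (dg (Suc (Suc q)) i (cn (Suc q) i True w))
           (cp (Suc (Suc (Suc q))) (Suc i) (cn (Suc (Suc q)) (Suc i) False (cn (Suc q) i True w))
               (dg (Suc (Suc q)) (Suc (Suc i)) (cn (Suc q) i False w)))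
         = cn (Suc (Suc q)) i False (cn (Suc q) i True w)"
proof -
  let ?N2 = "Suc (Suc q)" let ?N3 = "Suc ?N2" let ?b = "Suc i" let ?c = "Suc (Suc i)"
  let ?P = "cn (Suc q) i True w" let ?Q = "cn (Suc q) i False w"
  let ?A = "cp ?N3 ?b (cn ?N2 ?b True ?P) (dg ?N2 ?b ?P)"
  let ?B = "cp ?N3 ?b (dg ?N2 ?c ?P) (cn ?N2 ?b True ?Q)"
  let ?D = "cp ?N3 ?b (cn ?N2 ?b False ?P) (dg ?N2 ?c ?Q)"
  have s1: "dg ?N2 i ?P = cn ?N2 ?b True (dg (Suc q) i w)"
    using cd_gt[of w "Suc q" i ?b True] w i by simp
  have s2: "dg (Suc q) i w = cp ?N2 ?b ?P ?Q"
    using cancel2[of w "Suc q" i] w i by simp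
  have s3: "cn ?N2 ?b True (cp ?N2 ?b ?P ?Q) = cp ?N3 ?c ?A ?B"
    by (rule trp[simplified]) (use w i in \<open>simp add: cs\<close>)
  have s4: "cp ?N3 ?c (cp ?N3 ?c ?A ?B) ?D = cp ?N3 ?c ?A (cp ?N3 ?c ?B ?D)"
    by (rule assoc) (use w i in \<open>simp_all add: cs\<close>)
  have s5: "cp ?N3 ?c ?B ?D = cp ?N3 ?b (cp ?N3 ?c (dg ?N2 ?c ?P) (cn ?N2 ?b False ?P))
                                        (cp ?N3 ?c (cn ?N2 ?b True ?Q) (dg ?N2 ?c ?Q))"
    by (rule interchange) (use w i in \<open>simp_all add: cs\<close>)
  have s5': "cp ?N3 ?c ?B ?D = cp ?N3 ?b (cn ?N2 ?b False ?P) (cn ?N2 ?b True ?Q)"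
    unfolding s5 using w i by (simp add: cs)
  have s6: "cp ?N3 ?c ?A (cp ?N3 ?b (cn ?N2 ?b False ?P) (cn ?N2 ?b True ?Q)) =
     cp ?N3 ?b (cp ?N3 ?c (cn ?N2 ?b True ?P) (cn ?N2 ?b False ?P)) (cp ?N3 ?c (dg ?N2 ?b ?P) (cn ?N2 ?b True ?Q))"
    by (rule interchange) (use w i in \<open>simp_all add: cs\<close>)
  have s6': "cp ?N3 ?c ?A (cp ?N3 ?b (cn ?N2 ?b False ?P) (cn ?N2 ?b True ?Q)) =
     cp ?N3 ?c (dg ?N2 ?b ?P) (cn ?N2 ?b True ?Q)"
    unfolding s6 using w i by (simp add: cs cancel2)
  have t1: "cn ?N2 i False ?P = cp ?N3 ?c (cn ?N2 i False ?P) (dg ?N2 ?c ?Q)"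
    using w i by (simp add: cs)
  have t2: "dg ?N2 ?c ?Q = cp ?N3 ?b (cn ?N2 ?b True ?Q) (cn ?N2 ?b False ?Q)"
    using cancel1[of ?Q ?N2 ?b] w i by simp
  have t3: "cn ?N2 i False ?P = cp ?N3 ?b (dg ?N2 ?b ?P) (cn ?N2 i False ?P)"
    using w i by (simp add: cs)
  have t4: "cn ?N2 ?b False ?Q = cn ?N2 i False ?Q"
    using cc_eq[of w "Suc q" i False] w i by simp
  have t5: "cp ?N3 ?c (cp ?N3 ?b (dg ?N2 ?b ?P) (cn ?N2 i False ?P)) (cp ?N3 ?b (cn ?N2 ?b True ?Q) (cn ?N2 ?b False ?Q))
     = cp ?N3 ?b (cp ?N3 ?c (dg ?N2 ?b ?P) (cn ?N2 ?b True ?Q)) (cp ?N3 ?c (cn ?N2 i False ?P) (cn ?N2 ?b False ?Q))"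
    by (rule interchange) (use w i in \<open>simp_all add: cs\<close>)
  have t6: "cp ?N3 ?c (cn ?N2 i False ?P) (cn ?N2 i False ?Q) = cn ?N2 i False (cp ?N2 ?b ?P ?Q)"
    by (rule ccp_lt[symmetric, simplified]) (use w i in \<open>simp_all add: cs\<close>)
  have t7: "cn ?N2 i False (dg (Suc q) i w) = dg ?N2 ?b (dg (Suc q) i w)"
    using cd_eq[of w "Suc q" i False] w i by simp
  have L: "cp ?N3 ?c (dg ?N2 i ?P) ?D = cp ?N3 ?c (dg ?N2 ?b ?P) (cn ?N2 ?b True ?Q)"
    unfolding s1 s2 s3 s4 s5' s6' by (rule refl)
  have "cn ?N2 i False ?P = cp ?N3 ?c (cp ?N3 ?b (dg ?N2 ?b ?P) (cn ?N2 i False ?P)) (cp ?N3 ?b (cn ?N2 ?b True ?Q) (cn ?N2 ?b False ?Q))"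
    by (subst t3[symmetric], subst t2[symmetric]) (rule t1)
  also have "\<dots> = cp ?N3 ?b (cp ?N3 ?c (dg ?N2 ?b ?P) (cn ?N2 ?b True ?Q)) (dg ?N2 ?b (dg (Suc q) i w))"
    by (subst t5, subst t4, subst t6, subst s2[symmetric], subst t7) (rule refl)
  also have "\<dots> = cp ?N3 ?c (dg ?N2 ?b ?P) (cn ?N2 ?b True ?Q)"
    by (rule unit_r') (use w i in \<open>simp_all add: cs\<close>)
  finally show ?thesis using L by simp
qed

lemma key_plus:
  assumes x: "x \<in> G (Suc (Suc q))" and i: "1 \<le> i" "i \<le> Suc q"
  shows "psi C (Suc (Suc (Suc q))) (Suc i) (psi C (Suc (Suc (Suc q))) i (cn (Suc (Suc q)) (Suc i) True x))
       = cn (Suc (Suc q)) i False (psi C (Suc (Suc q)) i x)"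
proof -
  let ?N1 = "Suc q" let ?N2 = "Suc (Suc q)" let ?N3 = "Suc ?N2" let ?b = "Suc i" let ?c = "Suc (Suc i)"
  let ?w = "fc ?N2 ?b False x" let ?v = "fc ?N2 ?b True x"
  let ?P = "cn ?N1 i True ?w" let ?Q = "cn ?N1 i False ?v" let ?Q' = "cn ?N1 i False ?w"
  let ?R = "cp ?N2 ?b x ?Q"
  let ?Gx = "cn ?N2 ?b True x"
  let ?S = "cp ?N3 ?b ?Gx (cn ?N2 i False x)"
  let ?Z = "cp ?N3 ?b (cp ?N3 ?b (dg ?N2 ?c ?P) ?Gx) (cn ?N2 i False x)"
  have w: "?w \<in> G ?N1" "?v \<in> G ?N1" using x i by simp_all
  note ctx = x i w
  have u1: "cn ?N2 ?b False ?R = cp ?N3 ?c (cp ?N3 ?b (cn ?N2 ?b False x) (dg ?N2 ?c ?Q)) (cp ?N3 ?b (dg ?N2 ?b ?Q) (cn ?N2 ?b False ?Q))"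
    by (rule trm[simplified]) (use ctx in \<open>simp add: cs\<close>)
  have u2: "cp ?N3 ?c ?S (cp ?N3 ?c (cp ?N3 ?b (cn ?N2 ?b False x) (dg ?N2 ?c ?Q)) (cp ?N3 ?b (dg ?N2 ?b ?Q) (cn ?N2 ?b False ?Q)))
     = cp ?N3 ?c (cp ?N3 ?c ?S (cp ?N3 ?b (cn ?N2 ?b False x) (dg ?N2 ?c ?Q))) (cp ?N3 ?b (dg ?N2 ?b ?Q) (cn ?N2 ?b False ?Q))"
    by (rule assoc[symmetric]) (use ctx in \<open>simp_all add: cs\<close>)
  have u3: "cp ?N3 ?c ?S (cp ?N3 ?b (cn ?N2 ?b False x) (dg ?N2 ?c ?Q))
     = cp ?N3 ?b (cp ?N3 ?c ?Gx (cn ?N2 ?b False x)) (cp ?N3 ?c (cn ?N2 i False x) (dg ?N2 ?c ?Q))"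
    by (rule interchange) (use ctx in \<open>simp_all add: cs\<close>)
  have u3': "cp ?N3 ?c ?S (cp ?N3 ?b (cn ?N2 ?b False x) (dg ?N2 ?c ?Q)) = cp ?N3 ?b (dg ?N2 ?b x) (cn ?N2 i False x)"
    unfolding u3 using ctx by (simp add: cs)
  have u4: "cp ?N3 ?c (cp ?N3 ?b (dg ?N2 ?b x) (cn ?N2 i False x)) (cp ?N3 ?b (dg ?N2 ?b ?Q) (cn ?N2 ?b False ?Q))
     = cp ?N3 ?b (cp ?N3 ?c (dg ?N2 ?b x) (dg ?N2 ?b ?Q)) (cp ?N3 ?c (cn ?N2 i False x) (cn ?N2 ?b False ?Q))"
    by (rule interchange) (use ctx in \<open>simp_all add: cs\<close>)
  have u5: "cp ?N3 ?c (dg ?N2 ?b x) (dg ?N2 ?b ?Q) = dg ?N2 ?b ?R"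
    by (rule dcp_le[symmetric, simplified]) (use ctx in \<open>simp_all add: cs\<close>)
  have u6: "cn ?N2 ?b False ?Q = cn ?N2 i False ?Q"
    using cc_eq[of ?v ?N1 i False] ctx by simp
  have u7: "cp ?N3 ?c (cn ?N2 i False x) (cn ?N2 i False ?Q) = cn ?N2 i False ?R"
    by (rule ccp_lt[symmetric, simplified]) (use ctx in \<open>simp_all add: cs\<close>)
  have K3: "cp ?N3 ?c ?S (cn ?N2 ?b False ?R) = cp ?N3 ?b (dg ?N2 ?b ?R) (cn ?N2 i False ?R)"
    by (subst u1, subst u2, subst u3', subst u4, subst u5, subst u6, subst u7) (rule refl)
  have v1: "?Z = cp ?N3 ?b (dg ?N2 ?c ?P) ?S"
    by (rule assoc) (use ctx in \<open>simp_all add: cs\<close>)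
  have v2: "cn ?N2 ?b False (cp ?N2 ?b ?P ?R) = cp ?N3 ?c (cp ?N3 ?b (cn ?N2 ?b False ?P) (dg ?N2 ?c ?R)) (cp ?N3 ?b (dg ?N2 ?b ?R) (cn ?N2 ?b False ?R))"
    by (rule trm[simplified]) (use ctx in \<open>simp add: cs\<close>)
  have v3: "cp ?N3 ?c (cp ?N3 ?b (dg ?N2 ?c ?P) ?S) (cp ?N3 ?c (cp ?N3 ?b (cn ?N2 ?b False ?P) (dg ?N2 ?c ?R)) (cp ?N3 ?b (dg ?N2 ?b ?R) (cn ?N2 ?b False ?R)))
     = cp ?N3 ?c (cp ?N3 ?c (cp ?N3 ?b (dg ?N2 ?c ?P) ?S) (cp ?N3 ?b (cn ?N2 ?b False ?P) (dg ?N2 ?c ?R))) (cp ?N3 ?b (dg ?N2 ?b ?R) (cn ?N2 ?b False ?R))"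
    by (rule assoc[symmetric]) (use ctx in \<open>simp_all add: cs\<close>)
  have v4: "cp ?N3 ?c (cp ?N3 ?b (dg ?N2 ?c ?P) ?S) (cp ?N3 ?b (cn ?N2 ?b False ?P) (dg ?N2 ?c ?R))
      = cp ?N3 ?b (cp ?N3 ?c (dg ?N2 ?c ?P) (cn ?N2 ?b False ?P)) (cp ?N3 ?c ?S (dg ?N2 ?c ?R))"
    by (rule interchange) (use ctx in \<open>simp_all add: cs\<close>)
  have v4': "cp ?N3 ?c (cp ?N3 ?b (dg ?N2 ?c ?P) ?S) (cp ?N3 ?b (cn ?N2 ?b False ?P) (dg ?N2 ?c ?R))
      = cp ?N3 ?b (cn ?N2 ?b False ?P) ?S"
    unfolding v4 using ctx by (simp add: cs)
  have v5: "cp ?N3 ?c (cp ?N3 ?b (cn ?N2 ?b False ?P) ?S) (cp ?N3 ?b (dg ?N2 ?b ?R) (cn ?N2 ?b False ?R))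
     = cp ?N3 ?b (cp ?N3 ?c (cn ?N2 ?b False ?P) (dg ?N2 ?b ?R)) (cp ?N3 ?c ?S (cn ?N2 ?b False ?R))"
    by (rule interchange) (use ctx in \<open>simp_all add: cs\<close>)
  have v7: "cp ?N3 ?b (cp ?N3 ?c (cn ?N2 ?b False ?P) (dg ?N2 ?b ?R)) (cp ?N3 ?b (dg ?N2 ?b ?R) (cn ?N2 i False ?R))
     = cp ?N3 ?b (cp ?N3 ?b (cp ?N3 ?c (cn ?N2 ?b False ?P) (dg ?N2 ?b ?R)) (dg ?N2 ?b ?R)) (cn ?N2 i False ?R)"
    by (rule assoc[symmetric]) (use ctx in \<open>simp_all add: cs\<close>)
  have v7': "cp ?N3 ?b (cp ?N3 ?c (cn ?N2 ?b False ?P) (dg ?N2 ?b ?R)) (dg ?N2 ?b ?R) = cp ?N3 ?c (cn ?N2 ?b False ?P) (dg ?N2 ?b ?R)"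
    by (rule unit_r') (use ctx in \<open>simp_all add: cs\<close>)
  have K1: "cp ?N3 ?c ?Z (cn ?N2 ?b False (cp ?N2 ?b ?P ?R)) = cp ?N3 ?b (cp ?N3 ?c (cn ?N2 ?b False ?P) (dg ?N2 ?b ?R)) (cn ?N2 i False ?R)"
    by (subst v1, subst v2, subst v3, subst v4', subst v5, subst K3, subst v7, subst v7') (rule refl)
  have m1: "psi C ?N3 i ?Gx = ?Z"
    using ctx by (simp add: psi_def cs cd_lt)
  have m2: "psi C ?N3 ?b ?Z = cp ?N3 ?c (cp ?N3 ?c (dg ?N2 i ?P) ?Z) (cn ?N2 ?b False (cp ?N2 ?b (cp ?N2 ?b ?P x) ?Q))"
    using ctx by (simp add: psi_def cs cd_lt cd_gt)
  have m3: "cp ?N2 ?b (cp ?N2 ?b ?P x) ?Q = cp ?N2 ?b ?P ?R"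
    by (rule assoc) (use ctx in \<open>simp_all add: cs\<close>)
  have m3': "psi C ?N2 i x = cp ?N2 ?b ?P ?R"
  proof -
    have "psi C ?N2 i x = cp ?N2 ?b (cp ?N2 ?b ?P x) ?Q" by (simp add: psi_def)
    then show ?thesis using m3 by (rule trans)
  qed
  have m4: "cp ?N3 ?c (cp ?N3 ?c (dg ?N2 i ?P) ?Z) (cn ?N2 ?b False (cp ?N2 ?b ?P ?R))
      = cp ?N3 ?c (dg ?N2 i ?P) (cp ?N3 ?c ?Z (cn ?N2 ?b False (cp ?N2 ?b ?P ?R)))"
    by (rule assoc) (use ctx in \<open>simp_all add: cs m3\<close>)
  have m6: "cp ?N3 ?c (cp ?N3 ?b (cn ?N2 ?b False ?P) (dg ?N2 ?c ?Q')) (cp ?N3 ?b (dg ?N2 ?b ?R) (cn ?N2 i False ?R))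
      = cp ?N3 ?b (cp ?N3 ?c (cn ?N2 ?b False ?P) (dg ?N2 ?b ?R)) (cp ?N3 ?c (dg ?N2 ?c ?Q') (cn ?N2 i False ?R))"
    by (rule interchange) (use ctx in \<open>simp_all add: cs\<close>)
  have m6': "cp ?N3 ?b (cp ?N3 ?c (cn ?N2 ?b False ?P) (dg ?N2 ?b ?R)) (cn ?N2 i False ?R)
       = cp ?N3 ?c (cp ?N3 ?b (cn ?N2 ?b False ?P) (dg ?N2 ?c ?Q')) (cn ?N2 i False ?R)"
    using m6 ctx by (simp add: cs)
  have m7: "cp ?N3 ?c (dg ?N2 i ?P) (cp ?N3 ?c (cp ?N3 ?b (cn ?N2 ?b False ?P) (dg ?N2 ?c ?Q')) (cn ?N2 i False ?R))
     = cp ?N3 ?c (cp ?N3 ?c (dg ?N2 i ?P) (cp ?N3 ?b (cn ?N2 ?b False ?P) (dg ?N2 ?c ?Q'))) (cn ?N2 i False ?R)"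
    by (rule assoc[symmetric]) (use ctx in \<open>simp_all add: cs\<close>)
  have m8: "cp ?N3 ?c (dg ?N2 i ?P) (cp ?N3 ?b (cn ?N2 ?b False ?P) (dg ?N2 ?c ?Q')) = cn ?N2 i False ?P"
    by (rule K2) (use ctx in simp_all)
  have m9: "cp ?N3 ?c (cn ?N2 i False ?P) (cn ?N2 i False ?R) = cn ?N2 i False (cp ?N2 ?b ?P ?R)"
    by (rule ccp_lt[symmetric, simplified]) (use ctx in \<open>simp_all add: cs\<close>)
  show ?thesis
    by (subst m1, subst m2, subst m3, subst m4, subst K1, subst m6', subst m7, subst m8, subst m9, subst m3') (rule refl)
qed

lemma K2m:
  assumes w: "w \<in> G (Suc q)" and i: "1 \<le> i" "i \<le> Suc q"
  shows "cp (Suc (Suc (Suc q))) (Suc (Suc i))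
           (cp (Suc (Suc (Suc q))) (Suc i) (dg (Suc (Suc q)) (Suc (Suc i)) (cn (Suc q) i True w))
               (cn (Suc (Suc q)) (Suc i) True (cn (Suc q) i False w)))
           (dg (Suc (Suc q)) i (cn (Suc q) i False w))
         = cn (Suc (Suc q)) i True (cn (Suc q) i False w)"
proof -
  let ?N2 = "Suc (Suc q)" let ?N3 = "Suc ?N2" let ?b = "Suc i" let ?c = "Suc (Suc i)"
  let ?P = "cn (Suc q) i True w" let ?Q = "cn (Suc q) i False w"
  let ?A = "cp ?N3 ?b (cn ?N2 ?b False ?P) (dg ?N2 ?c ?Q)"
  let ?B = "cp ?N3 ?b (dg ?N2 ?b ?Q) (cn ?N2 ?b False ?Q)"
  let ?D = "cp ?N3 ?b (dg ?N2 ?c ?P) (cn ?N2 ?b True ?Q)"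
  have s1: "dg ?N2 i ?Q = cn ?N2 ?b False (dg (Suc q) i w)"
    using cd_gt[of w "Suc q" i ?b False] w i by simp
  have s2: "dg (Suc q) i w = cp ?N2 ?b ?P ?Q"
    using cancel2[of w "Suc q" i] w i by simp
  have s3: "cn ?N2 ?b False (cp ?N2 ?b ?P ?Q) = cp ?N3 ?c ?A ?B"
    by (rule trm[simplified]) (use w i in \<open>simp add: cs\<close>)
  have s4: "cp ?N3 ?c ?D (cp ?N3 ?c ?A ?B) = cp ?N3 ?c (cp ?N3 ?c ?D ?A) ?B"
    by (rule assoc[symmetric]) (use w i in \<open>simp_all add: cs\<close>)
  have s5: "cp ?N3 ?c ?D ?A = cp ?N3 ?b (cp ?N3 ?c (dg ?N2 ?c ?P) (cn ?N2 ?b False ?P))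
                                        (cp ?N3 ?c (cn ?N2 ?b True ?Q) (dg ?N2 ?c ?Q))"
    by (rule interchange) (use w i in \<open>simp_all add: cs\<close>)
  have s5': "cp ?N3 ?c ?D ?A = cp ?N3 ?b (cn ?N2 ?b False ?P) (cn ?N2 ?b True ?Q)"
    unfolding s5 using w i by (simp add: cs)
  have s6: "cp ?N3 ?c (cp ?N3 ?b (cn ?N2 ?b False ?P) (cn ?N2 ?b True ?Q)) ?B =
     cp ?N3 ?b (cp ?N3 ?c (cn ?N2 ?b False ?P) (dg ?N2 ?b ?Q)) (cp ?N3 ?c (cn ?N2 ?b True ?Q) (cn ?N2 ?b False ?Q))"
    by (rule interchange) (use w i in \<open>simp_all add: cs\<close>)
  have s6': "cp ?N3 ?c (cp ?N3 ?b (cn ?N2 ?b False ?P) (cn ?N2 ?b True ?Q)) ?B =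
     cp ?N3 ?c (cn ?N2 ?b False ?P) (dg ?N2 ?b ?Q)"
    unfolding s6 using w i by (simp add: cs)
  have t1: "cn ?N2 i True ?Q = cp ?N3 ?c (dg ?N2 ?c ?P) (cn ?N2 i True ?Q)"
    using w i by (simp add: cs)
  have t2: "dg ?N2 ?c ?P = cp ?N3 ?b (cn ?N2 ?b True ?P) (cn ?N2 ?b False ?P)"
    using cancel1[of ?P ?N2 ?b] w i by simp
  have t3: "cn ?N2 i True ?Q = cp ?N3 ?b (cn ?N2 i True ?Q) (dg ?N2 ?b ?Q)"
    using w i by (simp add: cs)
  have t4: "cn ?N2 ?b True ?P = cn ?N2 i True ?P"
    using cc_eq[of w "Suc q" i True] w i by simp
  have t5: "cp ?N3 ?c (cp ?N3 ?b (cn ?N2 ?b True ?P) (cn ?N2 ?b False ?P)) (cp ?N3 ?b (cn ?N2 i True ?Q) (dg ?N2 ?b ?Q))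
     = cp ?N3 ?b (cp ?N3 ?c (cn ?N2 ?b True ?P) (cn ?N2 i True ?Q)) (cp ?N3 ?c (cn ?N2 ?b False ?P) (dg ?N2 ?b ?Q))"
    by (rule interchange) (use w i in \<open>simp_all add: cs\<close>)
  have t6: "cp ?N3 ?c (cn ?N2 i True ?P) (cn ?N2 i True ?Q) = cn ?N2 i True (cp ?N2 ?b ?P ?Q)"
    by (rule ccp_lt[symmetric, simplified]) (use w i in \<open>simp_all add: cs\<close>)
  have t7: "cn ?N2 i True (dg (Suc q) i w) = dg ?N2 ?b (dg (Suc q) i w)"
    using cd_eq[of w "Suc q" i True] w i by simp
  have L: "cp ?N3 ?c ?D (dg ?N2 i ?Q) = cp ?N3 ?c (cn ?N2 ?b False ?P) (dg ?N2 ?b ?Q)"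
    unfolding s1 s2 s3 s4 s5' s6' by (rule refl)
  have "cn ?N2 i True ?Q = cp ?N3 ?c (cp ?N3 ?b (cn ?N2 ?b True ?P) (cn ?N2 ?b False ?P)) (cp ?N3 ?b (cn ?N2 i True ?Q) (dg ?N2 ?b ?Q))"
    by (subst t3[symmetric], subst t2[symmetric]) (rule t1)
  also have "\<dots> = cp ?N3 ?b (dg ?N2 ?b (dg (Suc q) i w)) (cp ?N3 ?c (cn ?N2 ?b False ?P) (dg ?N2 ?b ?Q))"
    by (subst t5, subst t4, subst t6, subst s2[symmetric], subst t7) (rule refl)
  also have "\<dots> = cp ?N3 ?c (cn ?N2 ?b False ?P) (dg ?N2 ?b ?Q)"
    by (rule unit_l') (use w i in \<open>simp_all add: cs\<close>)
  finally show ?thesis using L by simp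
qed

lemma key_minus:
  assumes x: "x \<in> G (Suc (Suc q))" and i: "1 \<le> i" "i \<le> Suc q"
  shows "psi C (Suc (Suc (Suc q))) (Suc i) (psi C (Suc (Suc (Suc q))) i (cn (Suc (Suc q)) (Suc i) False x))
       = cn (Suc (Suc q)) i True (psi C (Suc (Suc q)) i x)"
proof -
  let ?N1 = "Suc q" let ?N2 = "Suc (Suc q)" let ?N3 = "Suc ?N2" let ?b = "Suc i" let ?c = "Suc (Suc i)"
  let ?w = "fc ?N2 ?b False x" let ?v = "fc ?N2 ?b True x"
  let ?P = "cn ?N1 i True ?w" let ?Q = "cn ?N1 i False ?v" let ?Pv = "cn ?N1 i True ?v"
  let ?L = "cp ?N2 ?b ?P x"
  let ?Gx = "cn ?N2 ?b False x"
  let ?S = "cp ?N3 ?b (cn ?N2 i True x) ?Gx"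
  let ?Z = "cp ?N3 ?b ?S (dg ?N2 ?c ?Q)"
  let ?A = "cp ?N3 ?b (cn ?N2 ?b True ?L) (dg ?N2 ?b ?L)"
  let ?B = "cp ?N3 ?b (dg ?N2 ?c ?L) (cn ?N2 ?b True ?Q)"
  have w: "?w \<in> G ?N1" "?v \<in> G ?N1" using x i by simp_all
  note ctx = x i w
  have n1: "psi C ?N3 i ?Gx = ?Z"
    using ctx by (simp add: psi_def cs cd_lt)
  have n2: "psi C ?N3 ?b ?Z = cp ?N3 ?c (cp ?N3 ?c (cn ?N2 ?b True (cp ?N2 ?b ?L ?Q)) ?Z) (dg ?N2 i ?Q)"
    using ctx by (simp add: psi_def cs cd_lt cd_gt)
  have n3: "cn ?N2 ?b True (cp ?N2 ?b ?L ?Q) = cp ?N3 ?c ?A ?B"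
    by (rule trp[simplified]) (use ctx in \<open>simp add: cs\<close>)
  have n4: "cp ?N3 ?c (cp ?N3 ?c ?A ?B) ?Z = cp ?N3 ?c ?A (cp ?N3 ?c ?B ?Z)"
    by (rule assoc) (use ctx in \<open>simp_all add: cs\<close>)
  have n5: "cp ?N3 ?c ?B ?Z = cp ?N3 ?b (cp ?N3 ?c (dg ?N2 ?c ?L) ?S) (cp ?N3 ?c (cn ?N2 ?b True ?Q) (dg ?N2 ?c ?Q))"
    by (rule interchange) (use ctx in \<open>simp_all add: cs\<close>)
  have n5': "cp ?N3 ?c ?B ?Z = cp ?N3 ?b ?S (cn ?N2 ?b True ?Q)"
    unfolding n5 using ctx by (simp add: cs)
  have n6: "cp ?N3 ?c ?A (cp ?N3 ?b ?S (cn ?N2 ?b True ?Q))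
     = cp ?N3 ?b (cp ?N3 ?c (cn ?N2 ?b True ?L) ?S) (cp ?N3 ?c (dg ?N2 ?b ?L) (cn ?N2 ?b True ?Q))"
    by (rule interchange) (use ctx in \<open>simp_all add: cs\<close>)
  let ?X = "cp ?N3 ?b (cn ?N2 ?b True ?P) (dg ?N2 ?b ?P)"
  let ?Y = "cp ?N3 ?b (dg ?N2 ?c ?P) (cn ?N2 ?b True x)"
  have k1: "cn ?N2 ?b True ?L = cp ?N3 ?c ?X ?Y"
    by (rule trp[simplified]) (use ctx in \<open>simp add: cs\<close>)
  have k2: "cp ?N3 ?c (cp ?N3 ?c ?X ?Y) ?S = cp ?N3 ?c ?X (cp ?N3 ?c ?Y ?S)"
    by (rule assoc) (use ctx in \<open>simp_all add: cs\<close>)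
  have k3: "cp ?N3 ?c ?Y ?S = cp ?N3 ?b (cp ?N3 ?c (dg ?N2 ?c ?P) (cn ?N2 i True x)) (cp ?N3 ?c (cn ?N2 ?b True x) ?Gx)"
    by (rule interchange) (use ctx in \<open>simp_all add: cs\<close>)
  have k3': "cp ?N3 ?c ?Y ?S = cp ?N3 ?b (cn ?N2 i True x) (dg ?N2 ?b x)"
    unfolding k3 using ctx by (simp add: cs)
  have k4: "cp ?N3 ?c ?X (cp ?N3 ?b (cn ?N2 i True x) (dg ?N2 ?b x))
      = cp ?N3 ?b (cp ?N3 ?c (cn ?N2 ?b True ?P) (cn ?N2 i True x)) (cp ?N3 ?c (dg ?N2 ?b ?P) (dg ?N2 ?b x))"
    by (rule interchange) (use ctx in \<open>simp_all add: cs\<close>)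
  have k5: "cn ?N2 ?b True ?P = cn ?N2 i True ?P"
    using cc_eq[of ?w ?N1 i True] ctx by simp
  have k6: "cp ?N3 ?c (cn ?N2 i True ?P) (cn ?N2 i True x) = cn ?N2 i True ?L"
    by (rule ccp_lt[symmetric, simplified]) (use ctx in \<open>simp_all add: cs\<close>)
  have k7: "cp ?N3 ?c (dg ?N2 ?b ?P) (dg ?N2 ?b x) = dg ?N2 ?b ?L"
    by (rule dcp_le[symmetric, simplified]) (use ctx in \<open>simp_all add: cs\<close>)
  have K3: "cp ?N3 ?c (cn ?N2 ?b True ?L) ?S = cp ?N3 ?b (cn ?N2 i True ?L) (dg ?N2 ?b ?L)"
    by (subst k1, subst k2, subst k3', subst k4, subst k5, subst k6, subst k7) (rule refl)
  have n7: "cp ?N3 ?b (cp ?N3 ?b (cn ?N2 i True ?L) (dg ?N2 ?b ?L)) (cp ?N3 ?c (dg ?N2 ?b ?L) (cn ?N2 ?b True ?Q))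
      = cp ?N3 ?b (cn ?N2 i True ?L) (cp ?N3 ?b (dg ?N2 ?b ?L) (cp ?N3 ?c (dg ?N2 ?b ?L) (cn ?N2 ?b True ?Q)))"
    by (rule assoc) (use ctx in \<open>simp_all add: cs\<close>)
  have n7': "cp ?N3 ?b (dg ?N2 ?b ?L) (cp ?N3 ?c (dg ?N2 ?b ?L) (cn ?N2 ?b True ?Q)) = cp ?N3 ?c (dg ?N2 ?b ?L) (cn ?N2 ?b True ?Q)"
    by (rule unit_l') (use ctx in \<open>simp_all add: cs\<close>)
  let ?E = "dg ?N2 ?c ?Pv"
  have n8: "cp ?N3 ?c (cp ?N3 ?b (cn ?N2 i True ?L) (dg ?N2 ?b ?L)) (cp ?N3 ?b ?E (cn ?N2 ?b True ?Q))
     = cp ?N3 ?b (cp ?N3 ?c (cn ?N2 i True ?L) ?E) (cp ?N3 ?c (dg ?N2 ?b ?L) (cn ?N2 ?b True ?Q))"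
    by (rule interchange) (use ctx in \<open>simp_all add: cs\<close>)
  have n8': "cp ?N3 ?b (cn ?N2 i True ?L) (cp ?N3 ?c (dg ?N2 ?b ?L) (cn ?N2 ?b True ?Q))
     = cp ?N3 ?c (cn ?N2 i True ?L) (cp ?N3 ?b ?E (cn ?N2 ?b True ?Q))"
    using n8 ctx by (simp add: cs)
  have n9: "cp ?N3 ?c (cp ?N3 ?c (cn ?N2 i True ?L) (cp ?N3 ?b ?E (cn ?N2 ?b True ?Q))) (dg ?N2 i ?Q)
     = cp ?N3 ?c (cn ?N2 i True ?L) (cp ?N3 ?c (cp ?N3 ?b ?E (cn ?N2 ?b True ?Q)) (dg ?N2 i ?Q))"
    by (rule assoc) (use ctx in \<open>simp_all add: cs\<close>)
  have n10: "cp ?N3 ?c (cp ?N3 ?b ?E (cn ?N2 ?b True ?Q)) (dg ?N2 i ?Q) = cn ?N2 i True ?Q"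
    by (rule K2m) (use ctx in simp_all)
  have n11: "cp ?N3 ?c (cn ?N2 i True ?L) (cn ?N2 i True ?Q) = cn ?N2 i True (cp ?N2 ?b ?L ?Q)"
    by (rule ccp_lt[symmetric, simplified]) (use ctx in \<open>simp_all add: cs\<close>)
  have p: "psi C ?N2 i x = cp ?N2 ?b ?L ?Q" by (simp add: psi_def)
  show ?thesis
    by (subst n1, subst n2, subst n3, subst n4, subst n5', subst n6, subst K3, subst n7, subst n7',
        subst n8', subst n9, subst n10, subst n11, subst p) (rule refl)
qed

lemma key:
  assumes x: "x \<in> G n" and i: "1 \<le> i" "Suc i \<le> n"
  shows "psi C (Suc n) (Suc i) (psi C (Suc n) i (cn n (Suc i) \<alpha> x)) = cn n i (\<not> \<alpha>) (psi C n i x)"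
proof -
  from i obtain q where n: "n = Suc (Suc q)" by (cases n; cases "n - 1") auto
  show ?thesis using x i key_plus[of x q i] key_minus[of x q i] unfolding n by (cases \<alpha>) auto
qed

lemma Psi_Suc: "1 \<le> r \<Longrightarrow> Psi C k (Suc r) x = psi C k r (Psi C k r x)"
  by (cases r) auto

lemma Phi_unf: "1 \<le> m \<Longrightarrow> Phi C k m x = Phi C k (m - 1) (Psi C k m x)"
  by (cases m) auto

lemma Psi_in: "x \<in> G n \<Longrightarrow> r \<le> n \<Longrightarrow> Psi C n r x \<in> G n"
proof (induction r)
  case 0 then show ?case by simp
next
  case (Suc r)
  show ?case
  proof (cases r)
    case 0 then show ?thesis using Suc by simp
  next
    case (Suc r')
    from Suc.prems obtain n' where n: "n = Suc n'" by (cases n) auto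
    show ?thesis using Suc.IH Suc.prems Suc unfolding n by simp
  qed
qed

lemma Psi_dg: "x \<in> G n \<Longrightarrow> 1 \<le> r \<Longrightarrow> r \<le> Suc n \<Longrightarrow> 1 \<le> j \<Longrightarrow> j \<le> Suc n \<Longrightarrow>
  Psi C (Suc n) r (dg n j x) = (if j \<le> r then dg n (max (j - 1) 1) (Psi C n (r - 1) x) else dg n j (Psi C n r x))"
proof (induction r arbitrary: j)
  case 0 then show ?case by simp
next
  case (Suc r)
  show ?case
  proof (cases "r = 0")
    case True then show ?thesis using Suc.prems by (cases "j = 1") auto
  next
    case False
    then have r1: "1 \<le> r" by simp
    have rn: "r \<le> n" using Suc.prems by simp
    have eq: "Psi C (Suc n) (Suc r) (dg n j x) = psi C (Suc n) r (Psi C (Suc n) r (dg n j x))"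
      using Psi_Suc r1 by blast
    show ?thesis
    proof (cases "j \<le> r")
      case True
      let ?j' = "max (j - 1) 1"
      have ih: "Psi C (Suc n) r (dg n j x) = dg n ?j' (Psi C n (r - 1) x)"
        using Suc.IH[of j] Suc.prems r1 True by simp
      have y: "Psi C n (r - 1) x \<in> G n" using Psi_in Suc.prems rn by simp
      show ?thesis
      proof (cases "?j' < r")
        case True
        have "psi C (Suc n) r (dg n ?j' (Psi C n (r - 1) x)) = dg n ?j' (psi C n (r - 1) (Psi C n (r - 1) x))"
          by (rule psi_dg_lt) (use y True rn in auto)
        moreover have "psi C n (r - 1) (Psi C n (r - 1) x) = Psi C n r x"
        proof -
          have "1 \<le> r - 1" using True by (simp only: max_less_iff_conj) arith
          then have "Psi C n (Suc (r - 1)) x = psi C n (r - 1) (Psi C n (r - 1) x)" by (rule Psi_Suc)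
          moreover have "Suc (r - 1) = r" using r1 by simp
          ultimately show ?thesis by simp
        qed
        ultimately show ?thesis using eq ih \<open>j \<le> r\<close> by simp
      next
        case False
        then have "r = 1" "j = 1" using \<open>j \<le> r\<close> r1 Suc.prems by auto
        then show ?thesis using eq ih psi_dg_eq[of x n 1] Suc.prems by simp
      qed
    next
      case False
      have ih: "Psi C (Suc n) r (dg n j x) = dg n j (Psi C n r x)"
        using Suc.IH[of j] Suc.prems r1 False by simp
      have y: "Psi C n r x \<in> G n" using Psi_in Suc.prems rn by simp
      show ?thesis
      proof (cases "j = Suc r")
        case True
        then show ?thesis using eq ih psi_dg_suc[OF y r1 rn] r1 by simp
      next
        case False
        then have "Suc r < j" using \<open>\<not> j \<le> r\<close> by simp
        then have "psi C (Suc n) r (dg n j (Psi C n r x)) = dg n j (psi C n r (Psi C n r x))"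
          using psi_dg_gt[OF y r1] Suc.prems by simp
        then show ?thesis using eq ih Psi_Suc[OF r1] \<open>Suc r < j\<close> by simp
      qed
    qed
  qed
qed

lemma Phi_dg: "x \<in> G n \<Longrightarrow> 1 \<le> i \<Longrightarrow> i \<le> m \<Longrightarrow> m \<le> Suc n \<Longrightarrow>
  Phi C (Suc n) m (dg n i x) = dg n 1 (Phi C n (m - 1) x)"
proof (induction m arbitrary: i x)
  case 0 then show ?case by simp
next
  case (Suc m)
  show ?case
  proof (cases "m = 0")
    case True then show ?thesis using Suc.prems by simp
  next
    case False
    then have m1: "1 \<le> m" by simp
    let ?i' = "max (i - 1) 1"
    have y: "Psi C n m x \<in> G n" using Psi_in Suc.prems by simp
    have "Phi C (Suc n) (Suc m) (dg n i x) = Phi C (Suc n) m (Psi C (Suc n) (Suc m) (dg n i x))" by simp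
    also have "Psi C (Suc n) (Suc m) (dg n i x) = dg n ?i' (Psi C n m x)"
      using Psi_dg[of x n "Suc m" i] Suc.prems by simp
    also have "Phi C (Suc n) m (dg n ?i' (Psi C n m x)) = dg n 1 (Phi C n (m - 1) (Psi C n m x))"
      by (rule Suc.IH) (use y Suc.prems m1 in auto)
    also have "Phi C n (m - 1) (Psi C n m x) = Phi C n m x"
      using Phi_unf[OF m1, of n x] by simp
    finally show ?thesis by simp
  qed
qed

lemma Psi_cn_low: "x \<in> G n \<Longrightarrow> 1 \<le> r \<Longrightarrow> r < j \<Longrightarrow> j \<le> n \<Longrightarrow>
  Psi C (Suc n) r (cn n j \<alpha> x) = cn n j \<alpha> (Psi C n r x)"
proof (induction r)
  case 0 then show ?case by simp
next
  case (Suc r)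
  show ?case
  proof (cases "r = 0")
    case True then show ?thesis by simp
  next
    case False
    then have r1: "1 \<le> r" by simp
    have y: "Psi C n r x \<in> G n" using Psi_in Suc.prems by simp
    have "Psi C (Suc n) (Suc r) (cn n j \<alpha> x) = psi C (Suc n) r (cn n j \<alpha> (Psi C n r x))"
      using Psi_Suc[OF r1] Suc.IH Suc.prems r1 by simp
    also have "\<dots> = cn n j \<alpha> (psi C n r (Psi C n r x))"
      by (rule psi_cn_lt) (use y r1 Suc.prems in auto)
    finally show ?thesis using Psi_Suc[OF r1] by simp
  qed
qed

lemma Psi_cn_high: "x \<in> G n \<Longrightarrow> 1 \<le> j \<Longrightarrow> j < r \<Longrightarrow> r \<le> Suc n \<Longrightarrow>
  Psi C (Suc n) r (cn n j \<alpha> x) = (if j = 1 then dg n 1 (Psi C n (r - 1) x) else cn n (j - 1) (\<not> \<alpha>) (Psi C n (r - 1) x))"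
proof (induction r)
  case 0 then show ?case by simp
next
  case (Suc r)
  have r1: "1 \<le> r" using Suc.prems by simp
  have rn: "r \<le> n" using Suc.prems by simp
  show ?case
  proof (cases "r = j")
    case True
    show ?thesis
    proof (cases "j = 1")
      case True
      then show ?thesis using \<open>r = j\<close> psi_cn_eq[of x n 1 \<alpha>] Suc.prems by simp
    next
      case False
      then obtain k where k: "j = Suc k" "1 \<le> k" using Suc.prems by (cases j) auto
      have y: "Psi C n k x \<in> G n" using Psi_in Suc.prems k by simp
      have "Psi C (Suc n) (Suc r) (cn n j \<alpha> x) = psi C (Suc n) (Suc k) (psi C (Suc n) k (Psi C (Suc n) k (cn n (Suc k) \<alpha> x)))"
        using \<open>r = j\<close> k Psi_Suc by simp
      also have "Psi C (Suc n) k (cn n (Suc k) \<alpha> x) = cn n (Suc k) \<alpha> (Psi C n k x)"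
        by (rule Psi_cn_low) (use Suc.prems k in auto)
      also have "psi C (Suc n) (Suc k) (psi C (Suc n) k (cn n (Suc k) \<alpha> (Psi C n k x))) = cn n k (\<not> \<alpha>) (psi C n k (Psi C n k x))"
        by (rule key) (use y k Suc.prems in auto)
      finally show ?thesis using k \<open>r = j\<close> Psi_Suc[of k n x] by simp
    qed
  next
    case False
    then have jr: "j < r" using Suc.prems by simp
    have ih: "Psi C (Suc n) r (cn n j \<alpha> x) = (if j = 1 then dg n 1 (Psi C n (r - 1) x) else cn n (j - 1) (\<not> \<alpha>) (Psi C n (r - 1) x))"
      using Suc.IH Suc.prems jr by simp
    have y: "Psi C n (r - 1) x \<in> G n" using Psi_in Suc.prems by simp
    have eq: "Psi C (Suc n) (Suc r) (cn n j \<alpha> x) = psi C (Suc n) r (Psi C (Suc n) r (cn n j \<alpha> x))"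
      using Psi_Suc r1 by blast
    have P: "psi C n (r - 1) (Psi C n (r - 1) x) = Psi C n r x"
      using Psi_Suc[of "r - 1" n x] jr Suc.prems by simp
    show ?thesis
    proof (cases "j = 1")
      case True
      have "psi C (Suc n) r (dg n 1 (Psi C n (r - 1) x)) = dg n 1 (psi C n (r - 1) (Psi C n (r - 1) x))"
        by (rule psi_dg_lt) (use y jr rn True in auto)
      then show ?thesis using eq ih True P by simp
    next
      case False
      have "psi C (Suc n) r (cn n (j - 1) (\<not> \<alpha>) (Psi C n (r - 1) x)) = cn n (j - 1) (\<not> \<alpha>) (psi C n (r - 1) (Psi C n (r - 1) x))"
        by (rule psi_cn_gt) (use y jr rn False Suc.prems in auto)
      then show ?thesis using eq ih False P by simp
    qed
  qed
qed

lemma Phi_cn: "x \<in> G n \<Longrightarrow> 1 \<le> j \<Longrightarrow> j < m \<Longrightarrow> m \<le> Suc n \<Longrightarrow>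
  Phi C (Suc n) m (cn n j \<alpha> x) = dg n 1 (Phi C n (m - 1) x)"
proof (induction m arbitrary: j \<alpha> x)
  case 0 then show ?case by simp
next
  case (Suc m)
  have m1: "1 \<le> m" using Suc.prems by simp
  have y: "Psi C n m x \<in> G n" using Psi_in Suc.prems by simp
  have Pm: "Phi C n (m - 1) (Psi C n m x) = Phi C n m x"
    using Phi_unf[OF m1, of n x] by simp
  have "Phi C (Suc n) (Suc m) (cn n j \<alpha> x) = Phi C (Suc n) m (Psi C (Suc n) (Suc m) (cn n j \<alpha> x))" by simp
  also have "Psi C (Suc n) (Suc m) (cn n j \<alpha> x) = (if j = 1 then dg n 1 (Psi C n m x) else cn n (j - 1) (\<not> \<alpha>) (Psi C n m x))"
    using Psi_cn_high[of x n j "Suc m" \<alpha>] Suc.prems by simp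
  finally have e: "Phi C (Suc n) (Suc m) (cn n j \<alpha> x) = Phi C (Suc n) m (if j = 1 then dg n 1 (Psi C n m x) else cn n (j - 1) (\<not> \<alpha>) (Psi C n m x))" .
  show ?case
  proof (cases "j = 1")
    case True
    have "Phi C (Suc n) m (dg n 1 (Psi C n m x)) = dg n 1 (Phi C n (m - 1) (Psi C n m x))"
      by (rule Phi_dg) (use y m1 Suc.prems in auto)
    then show ?thesis using e True Pm by simp
  next
    case False
    have "Phi C (Suc n) m (cn n (j - 1) (\<not> \<alpha>) (Psi C n m x)) = dg n 1 (Phi C n (m - 1) (Psi C n m x))"
      by (rule Suc.IH) (use y False Suc.prems in auto)
    then show ?thesis using e False Pm by simp
  qed
qed

end

theorem theorem5p6:
  fixes C :: "'a cubical_data" and m n :: nat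
  assumes "cubical_omega_cat_conn C"
    and "1 \<le> m" and "m \<le> n"
  shows "(\<forall>i x. 1 \<le> i \<and> i \<le> m \<and> x \<in> cells C (n - 1) \<longrightarrow>
            Phi C n m (degen C (n - 1) i x) = degen C (n - 1) 1 (Phi C (n - 1) (m - 1) x))
       \<and> (\<forall>i \<alpha> x. 1 \<le> i \<and> i \<le> m - 1 \<and> x \<in> cells C (n - 1) \<longrightarrow>
            Phi C n m (conn C (n - 1) i \<alpha> x) = degen C (n - 1) 1 (Phi C (n - 1) (m - 1) x))"
proof -
  interpret coc C by standard (rule assms(1))
  from assms obtain p where n: "n = Suc p" by (cases n) auto
  have m: "1 \<le> m" "m \<le> Suc p" using assms n by auto
  show ?thesis unfolding n using m Phi_dg[of _ p] Phi_cn[of _ p] by auto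
qed

end
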